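(* Let $\mathbf C$ and $\mathbf D$ be categories given by presentations (generators and relations) which are cliques. Let $O_{\mathbf C}$ be a nonempty set of objects of $\mathbf C$ and $G_{\mathbf C}$ a set of generators of $\mathbf C$ between objects of $O_{\mathbf C}$, and similarly $O_{\mathbf D}$, $G_{\mathbf D}$ for $\mathbf D$. Let $\alpha:O_{\mathbf C}\to O_{\mathbf D}$ and $\beta:G_{\mathbf C}\to G_{\mathbf D}$ be compatible bijections (if $g:a\to b$ then $\beta(g):\alpha(a)\to\alpha(b)$). Suppose the subcategory of $\mathbf D$ with objects $O_{\mathbf D}$ generated by $G_{\mathbf D}$ is a full subcategory of $\mathbf D$. Then the category $G(\alpha,\beta)$ is a clique.
   Context: A clique (abstract clique) is a category with a nonempty set of objects and exactly one morphism between each ordered pair of objects (equivalently a nonempty connected thin groupoid). $G(\alpha,\beta)$ is the category presented as follows: its objects are the pushout of the object sets of $\mathbf C$ and $\mathbf D$ along the bijection $\alpha$ (objects of $O_{\mathbf C}$ identified with their images); its generators are the pushout of the generators of $\mathbf C$ and of $\mathbf D$ along $\beta$; its relations are all relations of $\mathbf C$ and all relations of $\mathbf D$. *)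

theory Defs
  imports Main
begin

text \<open>A presentation of a category: objects, generators with source and target,
  and relations, each relation being a pair of parallel paths p, q from a to b,
  recorded as (a, b, p, q).  A path is a list of composable generators together
  with its endpoints (the empty path at a is the identity of a).\<close>

record ('o, 'g) pres =
  obj :: "'o set"
  gen :: "'g set"
  src :: "'g \<Rightarrow> 'o"
  tgt :: "'g \<Rightarrow> 'o"
  rel :: "('o \<times> 'o \<times> 'g list \<times> 'g list) set"

fun is_path :: "('o, 'g, 'z) pres_scheme \<Rightarrow> 'o \<Rightarrow> 'g list \<Rightarrow> 'o \<Rightarrow> bool" where
  "is_path P a [] b = (a = b \<and> a \<in> obj P)"
| "is_path P a (g # gs) b =
     (a \<in> obj P \<and> g \<in> gen P \<and> src P g = a \<and> is_path P (tgt P g) gs b)"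

definition wf_pres :: "('o, 'g, 'z) pres_scheme \<Rightarrow> bool" where
  "wf_pres P \<longleftrightarrow>
     (\<forall>g\<in>gen P. src P g \<in> obj P \<and> tgt P g \<in> obj P) \<and>
     (\<forall>(a, b, p, q)\<in>rel P. is_path P a p b \<and> is_path P a q b)"

text \<open>Equality of morphisms in the presented category: the congruence on paths
  a \<rightarrow> b generated by the relations.\<close>

inductive peq :: "('o, 'g, 'z) pres_scheme \<Rightarrow> 'o \<Rightarrow> 'o \<Rightarrow> 'g list \<Rightarrow> 'g list \<Rightarrow> bool"
  for P where
  peq_rel: "(c, d, p, q) \<in> rel P \<Longrightarrow> is_path P a u c \<Longrightarrow> is_path P d v b \<Longrightarrow>
            peq P a b (u @ p @ v) (u @ q @ v)"
| peq_refl: "is_path P a p b \<Longrightarrow> peq P a b p p"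
| peq_sym: "peq P a b p q \<Longrightarrow> peq P a b q p"
| peq_trans: "peq P a b p q \<Longrightarrow> peq P a b q r \<Longrightarrow> peq P a b p r"

definition clique :: "('o, 'g, 'z) pres_scheme \<Rightarrow> bool" where
  "clique P \<longleftrightarrow> obj P \<noteq> {} \<and>
     (\<forall>a\<in>obj P. \<forall>b\<in>obj P. (\<exists>p. is_path P a p b) \<and>
        (\<forall>p q. is_path P a p b \<longrightarrow> is_path P a q b \<longrightarrow> peq P a b p q))"

definition full_generated_subcat :: "('o, 'g, 'z) pres_scheme \<Rightarrow> 'o set \<Rightarrow> 'g set \<Rightarrow> bool" where
  "full_generated_subcat P Os Gs \<longleftrightarrow>
     (\<forall>a\<in>Os. \<forall>b\<in>Os. \<forall>p. is_path P a p b \<longrightarrow>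
        (\<exists>q. set q \<subseteq> Gs \<and> is_path P a q b \<and> peq P a b p q))"

text \<open>The pushout of object sets along the
  bijection alpha is realised concretely: objects of O_C are identified with their
  images, so the objects are (obj C - O_C) (tagged Inl) together with obj D
  (tagged Inr); likewise for generators along beta.\<close>

definition glue_obj :: "'a set \<Rightarrow> ('a \<Rightarrow> 'c) \<Rightarrow> 'a \<Rightarrow> 'a + 'c" where
  "glue_obj OC \<alpha> x = (if x \<in> OC then Inr (\<alpha> x) else Inl x)"

definition glue_gen :: "'b set \<Rightarrow> ('b \<Rightarrow> 'd) \<Rightarrow> 'b \<Rightarrow> 'b + 'd" where
  "glue_gen GC \<beta> g = (if g \<in> GC then Inr (\<beta> g) else Inl g)"

definition G_pres ::
  "('a, 'b) pres \<Rightarrow> ('c, 'd) pres \<Rightarrow> 'a set \<Rightarrow> 'b set \<Rightarrow> ('a \<Rightarrow> 'c) \<Rightarrow> ('b \<Rightarrow> 'd)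
   \<Rightarrow> ('a + 'c, 'b + 'd) pres" where
  "G_pres C D OC GC \<alpha> \<beta> =
    \<lparr> obj = Inl ` (obj C - OC) \<union> Inr ` obj D,
      gen = Inl ` (gen C - GC) \<union> Inr ` gen D,
      src = case_sum (\<lambda>g. glue_obj OC \<alpha> (src C g)) (\<lambda>g. Inr (src D g)),
      tgt = case_sum (\<lambda>g. glue_obj OC \<alpha> (tgt C g)) (\<lambda>g. Inr (tgt D g)),
      rel = (\<lambda>(a, b, p, q). (glue_obj OC \<alpha> a, glue_obj OC \<alpha> b,
                             map (glue_gen GC \<beta>) p, map (glue_gen GC \<beta>) q)) ` rel C
          \<union> (\<lambda>(a, b, p, q). (Inr a, Inr b, map Inr p, map Inr q)) ` rel D \<rparr>"

end

theory Submission
  imports Defs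
begin

lemma is_path_obj: "is_path P a p b \<Longrightarrow> a \<in> obj P \<and> b \<in> obj P"
  by (induction p arbitrary: a) auto

lemma is_path_append: "is_path P a (p @ q) c \<longleftrightarrow> (\<exists>b. is_path P a p b \<and> is_path P b q c)"
  by (induction p arbitrary: a) (auto dest: is_path_obj)

lemma peq_path:
  assumes "\<forall>(a,b,p,q)\<in>rel P. is_path P a p b \<and> is_path P a q b"
  shows "peq P a b p q \<Longrightarrow> is_path P a p b \<and> is_path P a q b"
proof (induction rule: peq.induct)
  case (peq_rel c d p q a u v b)
  then show ?case using assms by (fastforce simp: is_path_append)
qed auto

lemma peq_cong:
  "peq P a b p q \<Longrightarrow> is_path P c u a \<Longrightarrow> is_path P b v d \<Longrightarrow> peq P c d (u@p@v) (u@q@v)"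
proof (induction arbitrary: c u d v rule: peq.induct)
  case (peq_rel c' d' p q a u' v' b)
  have h1: "is_path P c (u@u') c'" using peq_rel by (auto simp: is_path_append)
  have h2: "is_path P d' (v'@v) d" using peq_rel by (auto simp: is_path_append)
  have "peq P c d ((u@u')@p@(v'@v)) ((u@u')@q@(v'@v))"
    by (rule peq.peq_rel[OF peq_rel(1) h1 h2])
  then show ?case by simp
next
  case (peq_refl a p b)
  then show ?case by (intro peq.peq_refl) (meson is_path_append)
next
  case (peq_sym a b p q)
  then show ?case by (auto intro: peq.peq_sym)
next
  case (peq_trans a b p q r)
  then show ?case by (meson peq.peq_trans)
qed

lemma map_path:
  assumes "\<forall>g\<in>gen P. fg g \<in> gen Q \<and> src Q (fg g) = fo (src P g) \<and> tgt Q (fg g) = fo (tgt P g)"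
    "\<forall>a\<in>obj P. fo a \<in> obj Q"
  shows "is_path P a p b \<Longrightarrow> is_path Q (fo a) (map fg p) (fo b)"
  using assms by (induction p arbitrary: a) auto

lemma map_peq:
  assumes "\<forall>g\<in>gen P. fg g \<in> gen Q \<and> src Q (fg g) = fo (src P g) \<and> tgt Q (fg g) = fo (tgt P g)"
    "\<forall>a\<in>obj P. fo a \<in> obj Q"
    "\<forall>(a,b,p,q)\<in>rel P. (fo a, fo b, map fg p, map fg q) \<in> rel Q"
  shows "peq P a b p q \<Longrightarrow> peq Q (fo a) (fo b) (map fg p) (map fg q)"
proof (induction rule: peq.induct)
  case (peq_rel c d p q a u v b)
  have "peq Q (fo a) (fo b) (map fg u @ map fg p @ map fg v) (map fg u @ map fg q @ map fg v)"
    apply (rule peq.peq_rel)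
    using peq_rel assms(3) apply fastforce
    using peq_rel map_path[OF assms(1,2)] by auto
  then show ?case by simp
next
  case (peq_refl a p b)
  then show ?case using map_path[OF assms(1,2)] by (auto intro: peq.peq_refl)
qed (auto intro: peq.intros)


locale glue =
  fixes C :: "('a, 'b) pres" and D :: "('c, 'd) pres"
    and OC :: "'a set" and GC :: "'b set" and OD :: "'c set" and GD :: "'d set"
    and \<alpha> :: "'a \<Rightarrow> 'c" and \<beta> :: "'b \<Rightarrow> 'd"
  assumes wfC: "wf_pres C" and wfD: "wf_pres D"
    and cqC: "clique C" and cqD: "clique D"
    and OCs: "OC \<subseteq> obj C" and OCne: "OC \<noteq> {}" and GCs: "GC \<subseteq> gen C"
    and GCe: "\<forall>g\<in>GC. src C g \<in> OC \<and> tgt C g \<in> OC"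
    and ODs: "OD \<subseteq> obj D" and ODne: "OD \<noteq> {}" and GDs: "GD \<subseteq> gen D"
    and GDe: "\<forall>g\<in>GD. src D g \<in> OD \<and> tgt D g \<in> OD"
    and bija: "bij_betw \<alpha> OC OD" and bijb: "bij_betw \<beta> GC GD"
    and comp: "\<forall>g\<in>GC. src D (\<beta> g) = \<alpha> (src C g) \<and> tgt D (\<beta> g) = \<alpha> (tgt C g)"
    and full: "full_generated_subcat D OD GD"
begin

abbreviation "G \<equiv> G_pres C D OC GC \<alpha> \<beta>"
abbreviation "go \<equiv> glue_obj OC \<alpha>"
abbreviation "gg \<equiv> glue_gen GC \<beta>"

lemma G_simps:
  "obj G = Inl ` (obj C - OC) \<union> Inr ` obj D"
  "gen G = Inl ` (gen C - GC) \<union> Inr ` gen D"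
  "src G (Inl g) = go (src C g)" "src G (Inr h) = Inr (src D h)"
  "tgt G (Inl g) = go (tgt C g)" "tgt G (Inr h) = Inr (tgt D h)"
  by (simp_all add: G_pres_def)

lemma homC1: "\<forall>g\<in>gen C. gg g \<in> gen G \<and> src G (gg g) = go (src C g) \<and> tgt G (gg g) = go (tgt C g)"
proof
  fix g assume g: "g \<in> gen C"
  show "gg g \<in> gen G \<and> src G (gg g) = go (src C g) \<and> tgt G (gg g) = go (tgt C g)"
  proof (cases "g \<in> GC")
    case True
    then have "\<beta> g \<in> GD" using bijb by (auto simp: bij_betw_def)
    then show ?thesis using True GDs comp GCe
      by (auto simp: G_simps glue_gen_def glue_obj_def)
  qed (use g in \<open>auto simp: G_simps glue_gen_def\<close>)
qed

lemma homC2: "\<forall>a\<in>obj C. go a \<in> obj G"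
  using bija ODs by (auto simp: G_simps glue_obj_def bij_betw_def)

lemma homC3: "\<forall>(a,b,p,q)\<in>rel C. (go a, go b, map gg p, map gg q) \<in> rel G"
  unfolding G_pres_def by (auto intro!: rev_image_eqI)

lemma homD1: "\<forall>g\<in>gen D. Inr g \<in> gen G \<and> src G (Inr g) = Inr (src D g) \<and> tgt G (Inr g) = Inr (tgt D g)"
  by (auto simp: G_simps)

lemma homD2: "\<forall>a\<in>obj D. Inr a \<in> obj G"
  by (auto simp: G_simps)

lemma homD3: "\<forall>(a,b,p,q)\<in>rel D. (Inr a, Inr b, map Inr p, map Inr q) \<in> rel G"
  unfolding G_pres_def by (auto intro!: rev_image_eqI)

lemmas pathC = map_path[OF homC1 homC2]
lemmas peqC = map_peq[OF homC1 homC2 homC3]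
lemmas pathD = map_path[OF homD1 homD2]
lemmas peqD = map_peq[OF homD1 homD2 homD3]

lemma wfG: "\<forall>(a,b,p,q)\<in>rel G. is_path G a p b \<and> is_path G a q b"
proof -
  have "\<forall>(a,b,p,q)\<in>rel C. is_path C a p b \<and> is_path C a q b"
       "\<forall>(a,b,p,q)\<in>rel D. is_path D a p b \<and> is_path D a q b"
    using wfC wfD by (auto simp: wf_pres_def)
  then show ?thesis using pathC pathD
    by (fastforce simp: G_pres_def)
qed

lemma peqG_path: "peq G a b p q \<Longrightarrow> is_path G a p b \<and> is_path G a q b"
  using peq_path[OF wfG] .

lemma lift_GD:
  assumes "set q \<subseteq> GD" "is_path D (\<alpha> o1) q d" "o1 \<in> OC" "d = \<alpha> o2" "o2 \<in> OC"
  shows "\<exists>r. set r \<subseteq> GC \<and> map \<beta> r = q \<and> is_path C o1 r o2"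
  using assms
proof (induction q arbitrary: o1)
  case Nil
  then have "o1 = o2" using bija by (auto simp: bij_betw_def inj_on_def)
  then show ?case using Nil OCs by auto
next
  case (Cons g q)
  from Cons.prems have g: "g \<in> GD" "src D g = \<alpha> o1" by auto
  obtain h where h: "h \<in> GC" "\<beta> h = g" using bijb g(1) by (auto simp: bij_betw_def)
  have "src C h = o1" using comp h g GCe Cons.prems(3) bija
    by (metis bij_betw_def inj_on_def)
  moreover have "is_path D (\<alpha> (tgt C h)) q d" using Cons.prems h comp by auto
  then obtain r where r: "set r \<subseteq> GC" "map \<beta> r = q" "is_path C (tgt C h) r o2"
    using Cons.IH Cons.prems h GCe by auto
  ultimately show ?case using h r GCs OCs Cons.prems
    by (intro exI[of _ "h # r"]) auto
qed


lemma cC: "a \<in> obj C \<Longrightarrow> b \<in> obj C \<Longrightarrow> \<exists>p. is_path C a p b"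
  "is_path C a p b \<Longrightarrow> is_path C a q b \<Longrightarrow> peq C a b p q"
  using cqC is_path_obj[of C a p b] unfolding clique_def by blast+

lemma cD: "a \<in> obj D \<Longrightarrow> b \<in> obj D \<Longrightarrow> \<exists>p. is_path D a p b"
  "is_path D a p b \<Longrightarrow> is_path D a q b \<Longrightarrow> peq D a b p q"
  using cqD is_path_obj[of D a p b] unfolding clique_def by blast+

lemma go_OC: "o1 \<in> OC \<Longrightarrow> go o1 = Inr (\<alpha> o1)"
  by (simp add: glue_obj_def)

lemma key:
  assumes "o1 \<in> OC" "o2 \<in> OC" "is_path C o1 p o2" "is_path D (\<alpha> o1) q (\<alpha> o2)"
  shows "peq G (Inr (\<alpha> o1)) (Inr (\<alpha> o2)) (map gg p) (map Inr q)"
proof -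
  have ao: "\<alpha> o1 \<in> OD" "\<alpha> o2 \<in> OD" using assms bija by (auto simp: bij_betw_def)
  obtain q' where q': "set q' \<subseteq> GD" "is_path D (\<alpha> o1) q' (\<alpha> o2)" "peq D (\<alpha> o1) (\<alpha> o2) q q'"
    using full ao assms(4) unfolding full_generated_subcat_def by blast
  obtain r where r: "set r \<subseteq> GC" "map \<beta> r = q'" "is_path C o1 r o2"
    using lift_GD[OF q'(1,2) assms(1) refl assms(2)] by blast
  have "peq C o1 o2 p r" using cC(2) assms(3) r(3) .
  from peqC[OF this] have 1: "peq G (Inr (\<alpha> o1)) (Inr (\<alpha> o2)) (map gg p) (map gg r)"
    using assms go_OC by simp
  have "map gg r = map Inr q'" using r(1,2) by (auto simp: glue_gen_def)
  moreover have "peq G (Inr (\<alpha> o1)) (Inr (\<alpha> o2)) (map Inr q) (map Inr q')"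
    using peqD[OF q'(3)] .
  ultimately show ?thesis using 1 by (metis peq.peq_sym peq.peq_trans)
qed

definition "o0 = (SOME o1. o1 \<in> OC)"
lemma o0: "o0 \<in> OC" using OCne unfolding o0_def by (simp add: some_in_eq)
lemma o0C: "o0 \<in> obj C" using o0 OCs by auto
lemma ao0D: "\<alpha> o0 \<in> obj D" using o0 bija ODs by (auto simp: bij_betw_def)

definition "z = Inr (\<alpha> o0)"

definition "sig x = (case x of Inl c \<Rightarrow> map gg (SOME p. is_path C o0 p c)
   | Inr d \<Rightarrow> map Inr (SOME q. is_path D (\<alpha> o0) q d))"
definition "tau x = (case x of Inl c \<Rightarrow> map gg (SOME p. is_path C c p o0)
   | Inr d \<Rightarrow> map Inr (SOME q. is_path D d q (\<alpha> o0)))"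

lemma sigC:
  assumes "c \<in> obj C" "is_path C o0 p c"
  shows "peq G z (go c) (sig (go c)) (map gg p)"
proof (cases "c \<in> OC")
  case True
  define q where "q = (SOME q. is_path D (\<alpha> o0) q (\<alpha> c))"
  have "\<alpha> c \<in> obj D" using True bija ODs by (auto simp: bij_betw_def)
  then have q: "is_path D (\<alpha> o0) q (\<alpha> c)" unfolding q_def using cD(1)[OF ao0D] by (metis someI)
  have "sig (go c) = map Inr q" using True by (simp add: sig_def q_def glue_obj_def)
  then show ?thesis using key[OF o0 True assms(2) q] True
    by (simp add: z_def go_OC peq.peq_sym)
next
  case False
  define p' where "p' = (SOME p. is_path C o0 p c)"
  have p': "is_path C o0 p' c" unfolding p'_def using cC(1)[OF o0C assms(1)] by (metis someI)
  have "sig (go c) = map gg p'" using False by (simp add: sig_def p'_def glue_obj_def)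
  then show ?thesis using peqC[OF cC(2)[OF p' assms(2)]] by (simp add: z_def go_OC o0)
qed

lemma sigD:
  assumes "d \<in> obj D" "is_path D (\<alpha> o0) q d"
  shows "peq G z (Inr d) (sig (Inr d)) (map Inr q)"
proof -
  define q' where "q' = (SOME q. is_path D (\<alpha> o0) q d)"
  have q': "is_path D (\<alpha> o0) q' d" unfolding q'_def using cD(1)[OF ao0D assms(1)] by (metis someI)
  show ?thesis using peqD[OF cD(2)[OF q' assms(2)]] by (simp add: z_def sig_def q'_def)
qed


lemma objG_cases:
  assumes "x \<in> obj G"
  obtains c where "c \<in> obj C" "c \<notin> OC" "x = Inl c" "go c = x" | d where "d \<in> obj D" "x = Inr d"
  using assms by (auto simp: G_simps glue_obj_def)

lemma sig_path: "x \<in> obj G \<Longrightarrow> is_path G z (sig x) x"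
proof (erule objG_cases)
  fix c assume c: "c \<in> obj C" "go c = x"
  obtain p where "is_path C o0 p c" using cC(1)[OF o0C c(1)] by blast
  then show ?thesis using sigC[OF c(1)] c peqG_path by blast
next
  fix d assume d: "d \<in> obj D" "x = Inr d"
  obtain q where "is_path D (\<alpha> o0) q d" using cD(1)[OF ao0D d(1)] by blast
  then show ?thesis using sigD[OF d(1)] d peqG_path by blast
qed

lemma gen_step:
  assumes "g \<in> gen G"
  shows "peq G z (tgt G g) (sig (src G g) @ [g]) (sig (tgt G g))"
proof -
  consider h where "h \<in> gen C" "h \<notin> GC" "g = Inl h" | h where "h \<in> gen D" "g = Inr h"
    using assms by (auto simp: G_simps)
  then show ?thesis
  proof cases
    case 1
    have st: "src C h \<in> obj C" "tgt C h \<in> obj C" using wfC 1 by (auto simp: wf_pres_def)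
    obtain p where p: "is_path C o0 p (src C h)" using cC(1)[OF o0C st(1)] by blast
    have pg: "is_path C o0 (p @ [h]) (tgt C h)" using p 1 st by (auto simp: is_path_append)
    have gg: "gg h = g" using 1 by (simp add: glue_gen_def)
    have gp: "is_path G (go (src C h)) [g] (go (tgt C h))"
      using pathC[of "src C h" "[h]" "tgt C h"] 1 st gg homC2 by simp
    have a: "peq G z (go (tgt C h)) (sig (go (src C h)) @ [g]) (map gg p @ [g])"
    proof -
      have "is_path G z [] z" using homD2 ao0D by (simp add: z_def)
      from peq_cong[OF sigC[OF st(1) p] this gp] show ?thesis by simp
    qed
    have b: "peq G z (go (tgt C h)) (sig (go (tgt C h))) (map gg (p @ [h]))"
      using sigC[OF st(2) pg] .
    have "src G g = go (src C h)" "tgt G g = go (tgt C h)" "map gg (p @ [h]) = map gg p @ [g]"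
      using 1 gg by (simp_all add: G_simps)
    then show ?thesis using peq.peq_trans[OF a peq.peq_sym[OF b[unfolded \<open>map _ (p @ [h]) = _\<close>]]] by simp
  next
    case 2
    have st: "src D h \<in> obj D" "tgt D h \<in> obj D" using wfD 2 by (auto simp: wf_pres_def)
    obtain p where p: "is_path D (\<alpha> o0) p (src D h)" using cD(1)[OF ao0D st(1)] by blast
    have pg: "is_path D (\<alpha> o0) (p @ [h]) (tgt D h)" using p 2 st by (auto simp: is_path_append)
    have gp: "is_path G (Inr (src D h)) [g] (Inr (tgt D h))"
      using pathD[of "src D h" "[h]" "tgt D h"] 2 st homD2 by simp
    have a: "peq G z (Inr (tgt D h)) (sig (Inr (src D h)) @ [g]) (map Inr p @ [g])"
    proof -
      have "is_path G z [] z" using homD2 ao0D by (simp add: z_def)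
      from peq_cong[OF sigD[OF st(1) p] this gp] show ?thesis by simp
    qed
    have b: "peq G z (Inr (tgt D h)) (sig (Inr (tgt D h))) (map Inr (p @ [h]))"
      using sigD[OF st(2) pg] .
    have "src G g = Inr (src D h)" "tgt G g = Inr (tgt D h)" "map Inr (p @ [h]) = map Inr p @ [g]"
      using 2 by (simp_all add: G_simps)
    then show ?thesis using peq.peq_trans[OF a peq.peq_sym[OF b[unfolded \<open>map _ (p @ [h]) = _\<close>]]] by simp
  qed
qed


lemma zG: "z \<in> obj G" using homD2 ao0D by (simp add: z_def)

lemma path_step: "is_path G x p y \<Longrightarrow> peq G z y (sig x @ p) (sig y)"
proof (induction p arbitrary: x)
  case Nil
  then show ?case using sig_path by (auto intro: peq.peq_refl)
next
  case (Cons g p)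
  then have g: "g \<in> gen G" "src G g = x" "is_path G (tgt G g) p y" by auto
  have zp: "is_path G z [] z" using zG by simp
  have "peq G z y ([] @ (sig x @ [g]) @ p) ([] @ sig (tgt G g) @ p)"
    using peq_cong[OF gen_step[OF g(1)] zp g(3)] g(2) by simp
  then have "peq G z y (sig x @ g # p) (sig (tgt G g) @ p)" by simp
  then show ?case using Cons.IH[OF g(3)] by (rule peq.peq_trans)
qed

lemma tau:
  assumes "x \<in> obj G"
  shows "is_path G x (tau x) z \<and> peq G x x (tau x @ sig x) []"
  using assms
proof (rule objG_cases)
  fix c assume c: "c \<in> obj C" "c \<notin> OC" "x = Inl c" "go c = x"
  define p1 where "p1 = (SOME p. is_path C c p o0)"
  define p2 where "p2 = (SOME p. is_path C o0 p c)"
  have p1: "is_path C c p1 o0" unfolding p1_def using cC(1)[OF c(1) o0C] by (metis someI)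
  have p2: "is_path C o0 p2 c" unfolding p2_def using cC(1)[OF o0C c(1)] by (metis someI)
  have e: "tau x = map gg p1" "sig x = map gg p2" using c by (simp_all add: tau_def sig_def p1_def p2_def)
  have "is_path C c (p1 @ p2) c" using p1 p2 by (auto simp: is_path_append)
  moreover have "is_path C c [] c" using c by simp
  ultimately have "peq C c c (p1 @ p2) []" by (rule cC(2))
  from peqC[OF this] have "peq G x x (tau x @ sig x) []" using c e by simp
  moreover have "is_path G x (tau x) z" using pathC[OF p1] c e o0 go_OC by (simp add: z_def)
  ultimately show ?thesis by simp
next
  fix d assume d: "d \<in> obj D" "x = Inr d"
  define p1 where "p1 = (SOME p. is_path D d p (\<alpha> o0))"
  define p2 where "p2 = (SOME p. is_path D (\<alpha> o0) p d)"
  have p1: "is_path D d p1 (\<alpha> o0)" unfolding p1_def using cD(1)[OF d(1) ao0D] by (metis someI)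
  have p2: "is_path D (\<alpha> o0) p2 d" unfolding p2_def using cD(1)[OF ao0D d(1)] by (metis someI)
  have e: "tau x = map Inr p1" "sig x = map Inr p2" using d by (simp_all add: tau_def sig_def p1_def p2_def)
  have "is_path D d (p1 @ p2) d" using p1 p2 by (auto simp: is_path_append)
  moreover have "is_path D d [] d" using d by simp
  ultimately have "peq D d d (p1 @ p2) []" by (rule cD(2))
  from peqD[OF this] have "peq G x x (tau x @ sig x) []" using d e by simp
  moreover have "is_path G x (tau x) z" using pathD[OF p1] d e by (simp add: z_def)
  ultimately show ?thesis by simp
qed

lemma to_canon:
  assumes "is_path G a p b"
  shows "peq G a b p (tau a @ sig b)"
proof -
  have a: "a \<in> obj G" using is_path_obj[OF assms] by simp
  have ap: "is_path G a [] a" using a by simp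
  have "peq G a b ([] @ [] @ p) ([] @ (tau a @ sig a) @ p)"
    using peq_cong[OF peq.peq_sym[OF conjunct2[OF tau[OF a]]] ap assms] .
  moreover have bp: "is_path G b [] b" using is_path_obj[OF assms] by simp
  have "peq G a b (tau a @ (sig a @ p) @ []) (tau a @ sig b @ [])"
    using peq_cong[OF path_step[OF assms] conjunct1[OF tau[OF a]] bp] .
  ultimately show ?thesis by (simp add: peq.peq_trans)
qed

lemma cliqueG: "clique G"
  unfolding clique_def
proof (intro conjI ballI allI impI)
  show "obj G \<noteq> {}" using zG by auto
next
  fix a b assume "a \<in> obj G" "b \<in> obj G"
  then show "\<exists>p. is_path G a p b" using tau sig_path by (meson is_path_append)
next
  fix a b p q assume "is_path G a p b" "is_path G a q b"
  then show "peq G a b p q" using to_canon by (meson peq.peq_sym peq.peq_trans)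
qed

end
theorem mainTheorem19:
  fixes C :: "('a, 'b) pres" and D :: "('c, 'd) pres"
    and OC :: "'a set" and GC :: "'b set" and OD :: "'c set" and GD :: "'d set"
    and \<alpha> :: "'a \<Rightarrow> 'c" and \<beta> :: "'b \<Rightarrow> 'd"
  assumes "wf_pres C" and "wf_pres D"
    and "clique C" and "clique D"
    and "OC \<subseteq> obj C" and "OC \<noteq> {}" and "GC \<subseteq> gen C"
    and "\<forall>g\<in>GC. src C g \<in> OC \<and> tgt C g \<in> OC"
    and "OD \<subseteq> obj D" and "OD \<noteq> {}" and "GD \<subseteq> gen D"
    and "\<forall>g\<in>GD. src D g \<in> OD \<and> tgt D g \<in> OD"
    and "bij_betw \<alpha> OC OD" and "bij_betw \<beta> GC GD"
    and "\<forall>g\<in>GC. src D (\<beta> g) = \<alpha> (src C g) \<and> tgt D (\<beta> g) = \<alpha> (tgt C g)"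
    and "full_generated_subcat D OD GD"
  shows "clique (G_pres C D OC GC \<alpha> \<beta>)"
proof -
  interpret glue C D OC GC OD GD \<alpha> \<beta> using assms by unfold_locales
  show ?thesis by (rule cliqueG)
qed

end
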